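(* Let $n\geq2$ and $d\geq0$. Any solution $u:(d,\infty)\to\mathbb{R}^+$ of $$u''(x)=\Big[\frac{xu'(x)-u(x)}{2}+\frac{n-1}{u(x)}\Big]\big(1+(u'(x))^2\big)$$ satisfies, for some constant $\sigma=\sigma(u)\geq0$, the identity $$u(x)=2(n-1)x\int_x^\infty\frac{1}{t^2}\bigg\{\int_t^\infty\frac{s}{2}\,\frac{1+(u'(s))^2}{u(s)}\,e^{-\frac12\int_t^s z(1+(u'(z))^2)\,dz}\,ds\bigg\}dt+\sigma x$$ for all $x\in(d,\infty)$. *)

theory Defs
  imports "HOL-Analysis.Analysis"
begin

end

theory Submission imports Defs begin

locale sol =
  fixes n :: nat and d :: real and u u' u'' :: "real \<Rightarrow> real"
  assumes n2: "n \<ge> 2" and d0: "d \<ge> 0"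
    and pos: "\<And>x. x > d \<Longrightarrow> u x > 0"
    and d1: "\<And>x. x > d \<Longrightarrow> (u has_real_derivative u' x) (at x)"
    and d2: "\<And>x. x > d \<Longrightarrow> (u' has_real_derivative u'' x) (at x)"
    and ode: "\<And>x. x > d \<Longrightarrow>
       u'' x = ((x * u' x - u x) / 2 + (real n - 1) / u x) * (1 + (u' x)\<^sup>2)"
begin

lemma cu: "x > d \<Longrightarrow> isCont u x" using d1 DERIV_isCont by blast
lemma cu': "x > d \<Longrightarrow> isCont u' x" using d2 DERIV_isCont by blast

lemma contf: "d < a \<Longrightarrow> continuous_on {a..b} (\<lambda>z. z * (1 + (u' z)\<^sup>2))"
  by (intro continuous_at_imp_continuous_on ballI continuous_intros cu') auto

lemma contw: "d < a \<Longrightarrow> continuous_on {a..b} (\<lambda>z. z * u' z - u z)"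
  by (intro continuous_at_imp_continuous_on ballI continuous_intros cu' cu) auto

lemma sq_int: "a \<le> b \<Longrightarrow> ((\<lambda>z::real. z) has_integral (b\<^sup>2/2 - a\<^sup>2/2)) {a..b}"
proof -
  assume "a \<le> b"
  have "\<And>x. ((\<lambda>z::real. z\<^sup>2/2) has_real_derivative x) (at x within {a..b})"
    by (auto intro!: derivative_eq_intros)
  then show ?thesis using fundamental_theorem_of_calculus[of a b "\<lambda>z. z\<^sup>2/2" "\<lambda>z. z"] \<open>a \<le> b\<close>
    by (simp add: has_real_derivative_iff_has_vector_derivative)
qed


lemma per_t:
  assumes t: "t > d"
  shows "((\<lambda>s. s / 2 * ((1 + (u' s)\<^sup>2) / u s) *
                exp (- (1/2) * integral {t..s} (\<lambda>z. z * (1 + (u' z)\<^sup>2))))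
          has_integral (- (t * u' t - u t) / (2 * (real n - 1)))) {t..}
         \<and> t * u' t - u t \<le> 0"
proof -
  define f where "f = (\<lambda>z. z * (1 + (u' z)\<^sup>2))"
  define F where "F = (\<lambda>s. integral {t..s} f)"
  define E where "E = (\<lambda>s. exp (- (1/2) * F s))"
  define w where "w = (\<lambda>s. s * u' s - u s)"
  define N where "N = 2 * (real n - 1)"
  define H where "H = (\<lambda>s. w s * E s / N)"
  define k where "k = (\<lambda>s. s / 2 * ((1 + (u' s)\<^sup>2) / u s) * E s)"
  have N: "N > 0" using n2 unfolding N_def by simp
  have tpos: "t > 0" using t d0 by simp
  have cf: "\<And>b. continuous_on {t..b} f" using contf t unfolding f_def by auto
  have Fder_within: "\<And>b s. s \<in> {t..b} \<Longrightarrow> (F has_real_derivative f s) (at s within {t..b})"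
    unfolding F_def by (rule integral_has_real_derivative[OF cf])
  have Fder: "(F has_real_derivative f s) (at s)" if "s > t" for s
  proof -
    have "s \<in> interior {t..s+1}" using \<open>s>t\<close> by simp
    then have "at s within {t..s+1} = at s" by (rule at_within_interior)
    then show ?thesis using Fder_within[of s "s+1"] \<open>s>t\<close> by simp
  qed
  have Fcont: "\<And>b. continuous_on {t..b} F"
    using Fder_within by (meson DERIV_continuous continuous_on_eq_continuous_within)
  have F_t: "F t = 0" unfolding F_def by simp
  have F_ge: "F s \<ge> (s\<^sup>2 - t\<^sup>2)/2" if s: "s \<ge> t" for s
  proof -
    have "(f has_integral F s) {t..s}" unfolding F_def
      using cf integrable_continuous_real by blast
    then have "s\<^sup>2/2 - t\<^sup>2/2 \<le> F s"
      by (rule has_integral_le[OF sq_int[OF s]]) (use tpos in \<open>auto simp: f_def\<close>)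
    then show ?thesis by simp
  qed
  have Epos: "E s > 0" for s unfolding E_def by simp
  have wE: "w s = H s * N * exp (F s / 2)" for s
    using N unfolding H_def E_def by (simp add: exp_minus field_simps)
  have kpos: "k s > 0" if "s \<ge> t" for s
    using that tpos t pos[of s] Epos[of s] unfolding k_def by (simp add: add_pos_nonneg)
  have Hder: "(H has_real_derivative k s) (at s)" if s: "s > t" for s
  proof -
    have sd: "s > d" using s t by simp
    have "(H has_real_derivative ((u' s * 1 + s * u'' s - u' s) * E s + w s * (E s * (- (1/2) * f s))) / N) (at s)"
      unfolding H_def w_def E_def
      using N by (auto intro!: derivative_eq_intros d1[OF sd] d2[OF sd] Fder[OF s])
    moreover have "((u' s * 1 + s * u'' s - u' s) * E s + w s * (E s * (- (1/2) * f s))) / N = k s"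
      using N pos[OF sd] unfolding ode[OF sd] k_def f_def w_def N_def
      by (simp add: field_simps)
    ultimately show ?thesis by simp
  qed
  have Hcont: "continuous_on {a..b} H" if "t \<le> a" for a b
  proof -
    have "continuous_on {a..b} F" by (rule continuous_on_subset[OF Fcont[of b]]) (use that in auto)
    moreover have "continuous_on {a..b} w" unfolding w_def using contw t that by auto
    ultimately show ?thesis unfolding H_def E_def using N by (intro continuous_intros) auto
  qed
  have ftc: "(k has_integral (H b - H a)) {a..b}" if "t \<le> a" "a \<le> b" for a b
    using that by (intro fundamental_theorem_of_calculus_interior Hcont)
      (auto intro!: Hder simp: has_real_derivative_iff_has_vector_derivative[symmetric])
  have Hmono: "H a \<le> H b" if "t \<le> a" "a \<le> b" for a b
  proof -
    have "0 \<le> H b - H a" using ftc[OF that] by (rule has_integral_nonneg) (use kpos that in \<open>auto intro: less_imp_le\<close>)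
    then show ?thesis by simp
  qed

  have Fexp: "exp (F s / 2) \<ge> 1 + (s\<^sup>2 - t\<^sup>2)/4" if "s \<ge> t" for s
  proof -
    have "exp (F s / 2) \<ge> 1 + F s / 2" by (rule exp_ge_add_one_self)
    then show ?thesis using F_ge[OF that] by linarith
  qed
  have nopos: "\<not> (\<exists>s1\<ge>t. H s1 > 0)"
  proof
    assume "\<exists>s1\<ge>t. H s1 > 0"
    then obtain s1 where s1: "s1 \<ge> t" "H s1 > 0" by auto
    define c where "c = H s1 * N"
    have c: "c > 0" using s1 N unfolding c_def by simp
    define s0 where "s0 = max s1 (t + 1 + 8/c)"
    have w2: "w s \<ge> 2" if s: "s \<ge> s0" for s
    proof -
      have st: "s \<ge> t" "s \<ge> s1" "s - t \<ge> 1" "s - t \<ge> 8/c"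
        using s s1 c unfolding s0_def by (auto simp: max_def split: if_splits) (smt (verit) divide_pos_pos)+
      have "s\<^sup>2 - t\<^sup>2 \<ge> (s - t) * (s - t)" using st tpos by (simp add: power2_eq_square algebra_simps)
      also have "(s - t) * (s - t) \<ge> (s - t) * 1" using st by (intro mult_left_mono) auto
      finally have "s\<^sup>2 - t\<^sup>2 \<ge> 8/c" using st by simp
      then have "(s\<^sup>2 - t\<^sup>2)/4 \<ge> 2/c" by simp
      then have e: "exp (F s / 2) \<ge> 2/c" using Fexp[OF st(1)] by linarith
      have hc: "H s * N \<ge> c" using Hmono[OF s1(1) st(2)] N unfolding c_def by simp
      have "w s \<ge> c * (2/c)" unfolding wE
        by (rule mult_mono[OF hc e]) (use c hc in auto)
      then show ?thesis using c by simp
    qed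
    define \<phi> where "\<phi> = (\<lambda>s. arctan (u' s) - s)"
    have "\<phi> s0 \<le> \<phi> (s0 + 4)"
    proof (rule DERIV_nonneg_imp_nondecreasing[of s0 "s0+4" \<phi>])
      fix x assume x: "s0 \<le> x" "x \<le> s0 + 4"
      have xd: "x > d" using x s1 t unfolding s0_def by auto
      have der: "(\<phi> has_real_derivative (inverse (1 + (u' x)\<^sup>2) * u'' x - 1)) (at x)"
        unfolding \<phi>_def
        by (rule derivative_eq_intros DERIV_chain2[OF DERIV_arctan] d2[OF xd] refl)+
      have g: "1 + (u' x)\<^sup>2 > 0" by (simp add: add_pos_nonneg)
      have b: "(real n - 1) / u x \<ge> 0" using n2 pos[OF xd] by simp
      have a: "(x * u' x - u x) / 2 \<ge> 1" using w2[OF x(1), unfolded w_def] by simp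
      have "(x * u' x - u x) / 2 + (real n - 1) / u x \<ge> 1 + 0" using add_mono[OF a b] .
      then have "u'' x \<ge> 1 * (1 + (u' x)\<^sup>2)" unfolding ode[OF xd]
        by (intro mult_right_mono) (use g in auto)
      then have "inverse (1 + (u' x)\<^sup>2) * u'' x - 1 \<ge> 0" using g by (simp add: field_simps)
      then show "\<exists>y. (\<phi> has_real_derivative y) (at x) \<and> y \<ge> 0" using der by blast
    qed simp
    then have "arctan (u' (s0+4)) - arctan (u' s0) \<ge> 4" unfolding \<phi>_def by simp
    moreover have "arctan (u' (s0+4)) - arctan (u' s0) < pi"
      using arctan_bounded[of "u' (s0+4)"] arctan_bounded[of "u' s0"] by simp
    ultimately show False using pi_less_4 by simp
  qed
  have noneg: "\<not> (\<exists>\<epsilon>>0. \<forall>s\<ge>t. H s \<le> -\<epsilon>)"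
  proof
    assume "\<exists>\<epsilon>>0. \<forall>s\<ge>t. H s \<le> -\<epsilon>"
    then obtain \<epsilon> where e: "\<epsilon> > 0" "\<And>s. s \<ge> t \<Longrightarrow> H s \<le> -\<epsilon>" by auto
    define S where "S = max (2*t) 11"
    have St: "S \<ge> t" "S > d" using tpos t unfolding S_def by auto
    have wle: "w s \<le> - (\<epsilon> * N) * s\<^sup>2" if s: "s \<ge> S" for s
    proof -
      have st: "s \<ge> t" "s \<ge> 2*t" "s \<ge> 11" using s tpos unfolding S_def by auto
      have "t\<^sup>2 \<le> (s/2)\<^sup>2" using st tpos by (intro power_mono) auto
      then have "s\<^sup>2 - t\<^sup>2 \<ge> 3/4 * s\<^sup>2" by (simp add: power2_eq_square)
      moreover have "3/4 * s\<^sup>2 \<ge> 8 * s" using st by (simp add: power2_eq_square)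
      ultimately have y: "(s\<^sup>2 - t\<^sup>2)/4 \<ge> 2 * s" by simp
      define y where "y = (s\<^sup>2 - t\<^sup>2)/4"
      have y0: "y \<ge> 2 * s" using y unfolding y_def .
      have e1: "exp (F s / 2) \<ge> exp y" using F_ge[OF st(1)] unfolding y_def by simp
      have e2: "exp y \<ge> 1 + y + y\<^sup>2/2" using y0 st by (intro exp_lower_Taylor_quadratic) auto
      have "2 * s * (2 * s) \<le> y * y" using y0 st by (intro mult_mono) auto
      then have e3: "y\<^sup>2 \<ge> 4 * s\<^sup>2" by (simp add: power2_eq_square)
      have ex: "exp (F s / 2) \<ge> s\<^sup>2" using e1 e2 e3 y0 st zero_le_power2[of s]
        by linarith
      have hN: "H s * N \<le> - (\<epsilon> * N)" using mult_right_mono[OF e(2)[OF st(1)], of N] N by simp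
      have "w s \<le> - (\<epsilon> * N) * exp (F s / 2)" unfolding wE
        by (rule mult_right_mono[OF hN]) simp
      also have "\<dots> \<le> - (\<epsilon> * N) * s\<^sup>2" using ex e N by (intro mult_left_mono_neg) auto
      finally show ?thesis .
    qed
    define q where "q = (\<lambda>s. u s / s)"
    define M where "M = q S / (\<epsilon> * N) + 1"
    have qS: "q S > 0" unfolding q_def using pos[OF St(2)] St tpos by simp
    have M: "M \<ge> 0" using qS e N unfolding M_def by simp
    have "q S + (\<epsilon> * N) * S \<ge> q (S + M) + (\<epsilon> * N) * (S + M)"
    proof (rule DERIV_nonpos_imp_nonincreasing[where f = "\<lambda>s. q s + (\<epsilon> * N) * s"])
      fix x assume x: "S \<le> x" "x \<le> S + M"
      have xd: "x > d" "x > 0" using x St tpos by auto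
      have der0: "((\<lambda>s. q s + (\<epsilon> * N) * s) has_real_derivative
          ((u' x * x - u x * 1) / (x * x) + (\<epsilon> * N) * 1)) (at x)"
        unfolding q_def
        by (intro derivative_intros d1[OF xd(1)]) (use xd in auto)
      have "(u' x * x - u x * 1) / (x * x) + (\<epsilon> * N) * 1 = w x / x\<^sup>2 + \<epsilon> * N"
        unfolding w_def by (simp add: power2_eq_square algebra_simps)
      with der0 have der: "((\<lambda>s. q s + (\<epsilon> * N) * s) has_real_derivative (w x / x\<^sup>2 + \<epsilon> * N)) (at x)"
        by simp
      have "w x / x\<^sup>2 \<le> - (\<epsilon> * N)" using wle[OF x(1)] xd by (simp add: field_simps)
      then show "\<exists>y. ((\<lambda>s. q s + (\<epsilon> * N) * s) has_real_derivative y) (at x) \<and> y \<le> 0"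
        using der by (intro exI[of _ "w x / x\<^sup>2 + \<epsilon> * N"]) auto
    qed (use M in simp)
    then have "q (S + M) \<le> q S - (\<epsilon> * N) * M" by (simp add: algebra_simps)
    also have "\<dots> = - (\<epsilon> * N)" unfolding M_def using e N by (simp add: field_simps)
    finally have "q (S + M) < 0" using e N by (smt (verit) mult_pos_pos)
    moreover have "q (S + M) > 0" unfolding q_def using pos[of "S+M"] St M tpos by simp
    ultimately show False by simp
  qed
  have Hle: "H s \<le> 0" if "s \<ge> t" for s using nopos that by force
  have Hlim: "(H \<longlongrightarrow> 0) at_top"
  proof (rule order_tendstoI)
    fix a :: real assume a: "a < 0"
    have "\<not> (\<forall>s\<ge>t. H s \<le> - (-a))" using noneg a by (metis neg_0_less_iff_less)
    then obtain s1 where s1: "s1 \<ge> t" "H s1 > a" by (auto simp: not_le)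
    show "eventually (\<lambda>x. a < H x) at_top"
      using eventually_ge_at_top[of s1] by eventually_elim (use Hmono s1 in force)
  next
    fix a :: real assume a: "0 < a"
    show "eventually (\<lambda>x. H x < a) at_top"
      using eventually_ge_at_top[of t] by eventually_elim (use Hle a in force)
  qed
  have kint: "(k has_integral (- H t)) {t..}"
  proof (rule has_integral_to_inf)
    fix y show "k integrable_on {t..y}"
      by (cases "t \<le> y") (use ftc in auto)
  next
    have "eventually (\<lambda>y. integral {t..y} k = H y - H t) at_top"
      using eventually_ge_at_top[of t] by eventually_elim (use ftc in \<open>auto intro: integral_unique\<close>)
    moreover have "((\<lambda>y. H y - H t) \<longlongrightarrow> 0 - H t) at_top"
      by (intro tendsto_intros Hlim)
    ultimately show "((\<lambda>y. integral {t..y} k) \<longlongrightarrow> - H t) at_top"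
      by (simp add: tendsto_cong)
  next
    fix y assume "t \<le> y" then show "0 \<le> k y" using kpos by (simp add: less_imp_le)
  qed
  have Ht: "H t = w t / N" unfolding H_def E_def F_t by simp
  have eq: "- H t = - (t * u' t - u t) / (2 * (real n - 1))" unfolding Ht w_def N_def by (simp add: divide_simps)
  show ?thesis
  proof
    show "t * u' t - u t \<le> 0" using Hle[of t] N unfolding Ht w_def by (simp add: divide_le_0_iff)
  qed (rule kint[unfolded eq k_def E_def F_def f_def])
qed

lemma w_le: "t > d \<Longrightarrow> t * u' t - u t \<le> 0" using per_t by blast

lemma main:
  shows "\<exists>\<sigma>::real. \<sigma> \<ge> 0 \<and>
    (\<forall>t>d. (\<lambda>s. s / 2 * ((1 + (u' s)\<^sup>2) / u s) *
                exp (- (1/2) * integral {t..s} (\<lambda>z. z * (1 + (u' z)\<^sup>2))))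
              integrable_on {t..}) \<and>
    (\<forall>x>d. (\<lambda>t. 1 / t\<^sup>2 *
              integral {t..} (\<lambda>s. s / 2 * ((1 + (u' s)\<^sup>2) / u s) *
                exp (- (1/2) * integral {t..s} (\<lambda>z. z * (1 + (u' z)\<^sup>2)))))
            integrable_on {x..} \<and>
       u x = 2 * (real n - 1) * x *
         integral {x..} (\<lambda>t. 1 / t\<^sup>2 *
              integral {t..} (\<lambda>s. s / 2 * ((1 + (u' s)\<^sup>2) / u s) *
                exp (- (1/2) * integral {t..s} (\<lambda>z. z * (1 + (u' z)\<^sup>2)))))
         + \<sigma> * x)"
proof -
  define I where "I = (\<lambda>t. integral {t..} (\<lambda>s. s / 2 * ((1 + (u' s)\<^sup>2) / u s) *
                exp (- (1/2) * integral {t..s} (\<lambda>z. z * (1 + (u' z)\<^sup>2)))))"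
  define w where "w = (\<lambda>s. s * u' s - u s)"
  define N where "N = 2 * (real n - 1)"
  have N: "N > 0" using n2 unfolding N_def by simp
  have I: "I t = - w t / N" if "t > d" for t
    unfolding I_def w_def N_def using per_t[OF that] by (blast intro: integral_unique)
  define q where "q = (\<lambda>s. u s / s)"
  have qder: "(q has_real_derivative w x / x\<^sup>2) (at x)" if x: "x > d" for x
  proof -
    have xp: "x > 0" using x d0 by simp
    have "(q has_real_derivative (u' x * x - u x * 1) / (x * x)) (at x)"
      unfolding q_def by (intro derivative_intros d1[OF x]) (use xp in auto)
    moreover have "(u' x * x - u x * 1) / (x * x) = w x / x\<^sup>2"
      unfolding w_def by (simp add: power2_eq_square algebra_simps)
    ultimately show ?thesis by simp
  qed
  have qmono: "q b \<le> q a" if "d < a" "a \<le> b" for a b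
  proof (rule DERIV_nonpos_imp_nonincreasing[of a b q])
    fix x assume "a \<le> x" "x \<le> b"
    then have x: "x > d" using that by simp
    have "w x / x\<^sup>2 \<le> 0" using w_le[OF x] unfolding w_def by (simp add: divide_le_0_iff)
    then show "\<exists>y. (q has_real_derivative y) (at x) \<and> y \<le> 0" using qder[OF x] by blast
  qed (use that in simp)
  have qpos: "q x > 0" if "x > d" for x
    unfolding q_def using pos[OF that] that d0 by simp
  define \<sigma> where "\<sigma> = Inf (q ` {d<..})"
  have bdd: "bdd_below (q ` {d<..})" using qpos by (intro bdd_belowI[of _ 0]) (auto intro: less_imp_le)
  have ne: "q ` {d<..} \<noteq> {}" by auto
  have sig_le: "\<sigma> \<le> q x" if "x > d" for x
    unfolding \<sigma>_def using bdd that by (intro cInf_lower) auto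
  have sig0: "\<sigma> \<ge> 0" unfolding \<sigma>_def using ne qpos
    by (intro cInf_greatest) (auto intro: less_imp_le)
  have qlim: "(q \<longlongrightarrow> \<sigma>) at_top"
  proof (rule order_tendstoI)
    fix a assume a: "a < \<sigma>"
    show "eventually (\<lambda>x. a < q x) at_top"
      using eventually_gt_at_top[of d] by eventually_elim (use sig_le a in force)
  next
    fix a assume a: "\<sigma> < a"
    then obtain y where y: "y > d" "q y < a" unfolding \<sigma>_def using cInf_less_iff[OF ne bdd] by auto
    show "eventually (\<lambda>x. q x < a) at_top"
      using eventually_ge_at_top[of y] by eventually_elim (use qmono y in force)
  qed
  have G: "((\<lambda>t. - w t / t\<^sup>2) has_integral (q x - \<sigma>)) {x..}" if x: "x > d" for x
  proof (rule has_integral_to_inf)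
    have ftc: "((\<lambda>t. - w t / t\<^sup>2) has_integral (q x - q y)) {x..y}" if "x \<le> y" for y
    proof -
      have "((\<lambda>t. - w t / t\<^sup>2) has_integral ((\<lambda>s. - q s) y - (\<lambda>s. - q s) x)) {x..y}"
      proof (rule fundamental_theorem_of_calculus)
        fix s assume "s \<in> {x..y}"
        then have s: "s > d" using x by simp
        show "((\<lambda>s. - q s) has_vector_derivative - w s / s\<^sup>2) (at s within {x..y})"
          using DERIV_minus[OF qder[OF s]]
          by (auto simp: has_real_derivative_iff_has_vector_derivative[symmetric] intro: has_field_derivative_at_within)
      qed (use that in simp)
      then show ?thesis by simp
    qed
    fix y show "(\<lambda>t. - w t / t\<^sup>2) integrable_on {x..y}"
      by (cases "x \<le> y") (use ftc in auto)
  next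
    have ftc: "((\<lambda>t. - w t / t\<^sup>2) has_integral (q x - q y)) {x..y}" if "x \<le> y" for y
    proof -
      have "((\<lambda>t. - w t / t\<^sup>2) has_integral ((\<lambda>s. - q s) y - (\<lambda>s. - q s) x)) {x..y}"
      proof (rule fundamental_theorem_of_calculus)
        fix s assume "s \<in> {x..y}"
        then have s: "s > d" using x by simp
        show "((\<lambda>s. - q s) has_vector_derivative - w s / s\<^sup>2) (at s within {x..y})"
          using DERIV_minus[OF qder[OF s]]
          by (auto simp: has_real_derivative_iff_has_vector_derivative[symmetric] intro: has_field_derivative_at_within)
      qed (use that in simp)
      then show ?thesis by simp
    qed
    have "eventually (\<lambda>y. integral {x..y} (\<lambda>t. - w t / t\<^sup>2) = q x - q y) at_top"
      using eventually_ge_at_top[of x] by eventually_elim (metis ftc integral_unique)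
    moreover have "((\<lambda>y. q x - q y) \<longlongrightarrow> q x - \<sigma>) at_top"
      by (intro tendsto_intros qlim)
    ultimately show "((\<lambda>y. integral {x..y} (\<lambda>t. - w t / t\<^sup>2)) \<longlongrightarrow> q x - \<sigma>) at_top"
      by (simp add: tendsto_cong)
  next
    fix y assume "x \<le> y"
    then have "y > d" using x by simp
    then show "0 \<le> - w y / y\<^sup>2" using w_le[of y] unfolding w_def by simp
  qed
  have I_app: "\<And>t. integral {t..} (\<lambda>s. s / 2 * ((1 + (u' s)\<^sup>2) / u s) *
                exp (- (1/2) * integral {t..s} (\<lambda>z. z * (1 + (u' z)\<^sup>2)))) = I t"
    by (simp add: I_def)
  show ?thesis unfolding I_app
  proof (intro exI[of _ \<sigma>] conjI allI impI)
    show "\<sigma> \<ge> 0" by (rule sig0)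
  next
    fix t assume "t > d"
    then show "(\<lambda>s. s / 2 * ((1 + (u' s)\<^sup>2) / u s) *
                exp (- (1/2) * integral {t..s} (\<lambda>z. z * (1 + (u' z)\<^sup>2)))) integrable_on {t..}"
      using per_t by blast
  next
    fix x assume x: "x > d"
    have "((\<lambda>t. 1 / N * (- w t / t\<^sup>2)) has_integral (1 / N * (q x - \<sigma>))) {x..}"
      by (rule has_integral_mult_right[OF G[OF x]])
    moreover have "1 / t\<^sup>2 * I t = 1 / N * (- w t / t\<^sup>2)" if "t \<in> {x..}" for t
      using that x I[of t] by auto
    ultimately have hi: "((\<lambda>t. 1 / t\<^sup>2 * I t) has_integral (1 / N * (q x - \<sigma>))) {x..}"
      using has_integral_cong by (metis (no_types, lifting))
    then show "(\<lambda>t. 1 / t\<^sup>2 * I t) integrable_on {x..}" by blast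
    have xp: "x > 0" using x d0 by simp
    have "u x = N * x * (1 / N * (q x - \<sigma>)) + \<sigma> * x"
      using N xp unfolding q_def by (simp add: field_simps)
    then show "u x = 2 * (real n - 1) * x * integral {x..} (\<lambda>t. 1 / t\<^sup>2 * I t) + \<sigma> * x"
      using integral_unique[OF hi] unfolding N_def by simp
  qed
qed
end

theorem lemma2:
  fixes n :: nat and d :: real and u u' u'' :: "real \<Rightarrow> real"
  assumes "n \<ge> 2" and "d \<ge> 0"
    and pos: "\<And>x. x > d \<Longrightarrow> u x > 0"
    and d1: "\<And>x. x > d \<Longrightarrow> (u has_real_derivative u' x) (at x)"
    and d2: "\<And>x. x > d \<Longrightarrow> (u' has_real_derivative u'' x) (at x)"
    and ode: "\<And>x. x > d \<Longrightarrow>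
       u'' x = ((x * u' x - u x) / 2 + (real n - 1) / u x) * (1 + (u' x)\<^sup>2)"
  shows "\<exists>\<sigma>::real. \<sigma> \<ge> 0 \<and>
    (\<forall>t>d. (\<lambda>s. s / 2 * ((1 + (u' s)\<^sup>2) / u s) *
                exp (- (1/2) * integral {t..s} (\<lambda>z. z * (1 + (u' z)\<^sup>2))))
              integrable_on {t..}) \<and>
    (\<forall>x>d. (\<lambda>t. 1 / t\<^sup>2 *
              integral {t..} (\<lambda>s. s / 2 * ((1 + (u' s)\<^sup>2) / u s) *
                exp (- (1/2) * integral {t..s} (\<lambda>z. z * (1 + (u' z)\<^sup>2)))))
            integrable_on {x..} \<and>
       u x = 2 * (real n - 1) * x *
         integral {x..} (\<lambda>t. 1 / t\<^sup>2 *
              integral {t..} (\<lambda>s. s / 2 * ((1 + (u' s)\<^sup>2) / u s) *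
                exp (- (1/2) * integral {t..s} (\<lambda>z. z * (1 + (u' z)\<^sup>2)))))
         + \<sigma> * x)"
proof -
  interpret sol n d u u' u''
    by unfold_locales (use assms in auto)
  show ?thesis by (rule main)
qed

end
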